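(* Let $A$ be an integral domain such that each nonzero principal ideal of $A$ has only finitely many associated primes and each of these associated primes has height $1$. Then every overring of $A$ that is finitely generated as an $A$-algebra, flat over $A$, and well-centered on $A$ is a localization of $A$.
   Context: A prime $P$ of $A$ is an associated prime of an ideal $I$ if there is $a\in A$ such that $P$ is a minimal prime over $(I:_A a)=\{r\in A: ra\in I\}$. An overring of $A$ is a subring of the field of fractions of $A$ containing $A$. $B$ is well-centered on $A$ if for each $b\in B$ there is a unit $u$ of $B$ with $ub\in A$. $B$ is a localization of $A$ if $B=S^{-1}A$ for a multiplicatively closed set $S$ of nonzero elements of $A$. *)

theory Defs
  imports "HOL-Computational_Algebra.Fraction_Field"
begin

text \<open>The integral domain A is the whole type 'a (class idom); its field of
fractions is 'a fract, with A embedded via a |-> Fract a 1.\<close>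

definition emb :: "'a::idom \<Rightarrow> 'a fract" where
  "emb a = Fract a 1"

definition is_ideal :: "'a::comm_ring_1 set \<Rightarrow> bool" where
  "is_ideal I \<longleftrightarrow> 0 \<in> I \<and> (\<forall>x\<in>I. \<forall>y\<in>I. x + y \<in> I) \<and> (\<forall>r. \<forall>x\<in>I. r * x \<in> I)"

definition is_prime_ideal :: "'a::comm_ring_1 set \<Rightarrow> bool" where
  "is_prime_ideal P \<longleftrightarrow> is_ideal P \<and> P \<noteq> UNIV \<and>
     (\<forall>a b. a * b \<in> P \<longrightarrow> a \<in> P \<or> b \<in> P)"

definition principal_ideal :: "'a::comm_ring_1 \<Rightarrow> 'a set" where
  "principal_ideal a = {a * r | r. True}"

definition colon :: "'a::comm_ring_1 set \<Rightarrow> 'a \<Rightarrow> 'a set" where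
  "colon I a = {r. r * a \<in> I}"

definition minimal_prime_over :: "'a::comm_ring_1 set \<Rightarrow> 'a set \<Rightarrow> bool" where
  "minimal_prime_over P J \<longleftrightarrow> is_prime_ideal P \<and> J \<subseteq> P \<and>
     \<not> (\<exists>Q. is_prime_ideal Q \<and> J \<subseteq> Q \<and> Q \<subset> P)"

definition associated_prime :: "'a::comm_ring_1 set \<Rightarrow> 'a set \<Rightarrow> bool" where
  "associated_prime I P \<longleftrightarrow> (\<exists>a. minimal_prime_over P (colon I a))"

text \<open>Height of a prime: supremum of lengths n of chains of primes
  P_0 \<subset> P_1 \<subset> ... \<subset> P_n = P.\<close>
definition prime_chain_to :: "'a::comm_ring_1 set \<Rightarrow> nat \<Rightarrow> bool" where
  "prime_chain_to P n \<longleftrightarrow> (\<exists>C :: nat \<Rightarrow> 'a set.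
     (\<forall>i\<le>n. is_prime_ideal (C i)) \<and> (\<forall>i<n. C i \<subset> C (Suc i)) \<and> C n = P)"

definition height_one :: "'a::comm_ring_1 set \<Rightarrow> bool" where
  "height_one P \<longleftrightarrow> is_prime_ideal P \<and> prime_chain_to P 1 \<and> \<not> prime_chain_to P 2"

definition subring :: "'b::comm_ring_1 set \<Rightarrow> bool" where
  "subring R \<longleftrightarrow> 0 \<in> R \<and> 1 \<in> R \<and> (\<forall>x\<in>R. \<forall>y\<in>R. x + y \<in> R \<and> x * y \<in> R \<and> - x \<in> R)"

definition overring :: "'a::idom fract set \<Rightarrow> bool" where
  "overring B \<longleftrightarrow> subring B \<and> range emb \<subseteq> B"

definition alg_generated :: "'a::idom fract set \<Rightarrow> 'a fract set" where
  "alg_generated S = \<Inter>{R. subring R \<and> range emb \<subseteq> R \<and> S \<subseteq> R}"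

definition finitely_generated_algebra :: "'a::idom fract set \<Rightarrow> bool" where
  "finitely_generated_algebra B \<longleftrightarrow> (\<exists>S. finite S \<and> S \<subseteq> B \<and> B = alg_generated S)"

text \<open>Flatness of B over A via the equational criterion (Stacks 00HK):
  every relation sum a_i b_i = 0 (a_i in A, b_i in B) is trivial.\<close>
definition flat_over :: "'a::idom fract set \<Rightarrow> bool" where
  "flat_over B \<longleftrightarrow> (\<forall>(n::nat) (a::nat \<Rightarrow> 'a) (b::nat \<Rightarrow> 'a fract).
     (\<forall>i<n. b i \<in> B) \<and> (\<Sum>i<n. emb (a i) * b i) = 0 \<longrightarrow>
     (\<exists>(m::nat) (c::nat \<Rightarrow> 'a fract) (d::nat \<Rightarrow> nat \<Rightarrow> 'a).
        (\<forall>j<m. c j \<in> B) \<and>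
        (\<forall>i<n. b i = (\<Sum>j<m. emb (d i j) * c j)) \<and>
        (\<forall>j<m. (\<Sum>i<n. a i * d i j) = 0)))"

definition unit_of :: "'a::idom fract set \<Rightarrow> 'a fract \<Rightarrow> bool" where
  "unit_of B u \<longleftrightarrow> u \<in> B \<and> (\<exists>v\<in>B. u * v = 1)"

definition well_centered :: "'a::idom fract set \<Rightarrow> bool" where
  "well_centered B \<longleftrightarrow> (\<forall>b\<in>B. \<exists>u. unit_of B u \<and> u * b \<in> range emb)"

definition is_localization :: "'a::idom fract set \<Rightarrow> bool" where
  "is_localization B \<longleftrightarrow> (\<exists>S :: 'a set. 1 \<in> S \<and> 0 \<notin> S \<and> (\<forall>x\<in>S. \<forall>y\<in>S. x * y \<in> S) \<and>
     B = {Fract a s | a s. s \<in> S})"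

end

theory Submission
  imports Defs
begin

lemma emb_mult: "emb (a * b) = emb a * emb b"
  by (simp add: emb_def)
lemma emb_add: "emb (a + b) = emb a + emb b"
  by (simp add: emb_def)
lemma emb_1: "emb 1 = 1"
  by (simp add: emb_def One_fract_def)
lemma emb_0: "emb 0 = 0"
  by (simp add: emb_def Zero_fract_def)
lemma emb_minus: "emb (- a) = - emb a"
  by (simp add: emb_def)
lemma emb_inj: "emb a = emb b \<longleftrightarrow> a = b"
  by (simp add: emb_def eq_fract)
lemma emb_power: "emb (a ^ n) = emb a ^ n"
  by (induct n) (simp_all add: emb_1 emb_mult)
lemma emb_prod: "emb (prod f A) = (\<Prod>x\<in>A. emb (f x))"
  by (induct A rule: infinite_finite_induct) (simp_all add: emb_1 emb_mult)
lemma emb_sum: "emb (sum f A) = (\<Sum>x\<in>A. emb (f x))"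
  by (induct A rule: infinite_finite_induct) (simp_all add: emb_0 emb_add)
lemma emb_eq_0: "emb a = 0 \<longleftrightarrow> a = 0"
  using emb_inj[of a 0] by (simp add: emb_0)
lemma Fract_emb: "b \<noteq> 0 \<Longrightarrow> emb b * Fract a b = emb a"
  by (simp add: emb_def eq_fract)
lemma Fract_emb2: "Fract a b = emb a * inverse (emb b)"
  by (cases "b = 0") (simp_all add: emb_def eq_fract fract_collapse)


lemma ideal_0: "is_ideal I \<Longrightarrow> 0 \<in> I" by (simp add: is_ideal_def)
lemma ideal_add: "is_ideal I \<Longrightarrow> x \<in> I \<Longrightarrow> y \<in> I \<Longrightarrow> x + y \<in> I" by (simp add: is_ideal_def)
lemma ideal_mult: "is_ideal I \<Longrightarrow> x \<in> I \<Longrightarrow> r * x \<in> I" by (simp add: is_ideal_def)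
lemma ideal_mult2: "is_ideal I \<Longrightarrow> x \<in> I \<Longrightarrow> x * r \<in> I" by (simp add: is_ideal_def mult.commute)
lemma ideal_minus: "is_ideal I \<Longrightarrow> x \<in> I \<Longrightarrow> - x \<in> I"
  using ideal_mult[of I x "-1"] by simp

lemma ideal_sum: "is_ideal I \<Longrightarrow> (\<And>x. x \<in> A \<Longrightarrow> f x \<in> I) \<Longrightarrow> sum f A \<in> I"
  by (induct A rule: infinite_finite_induct) (auto simp: ideal_0 ideal_add)

lemma ideal_prod_in: "is_ideal I \<Longrightarrow> finite A \<Longrightarrow> x \<in> A \<Longrightarrow> f x \<in> I \<Longrightarrow> prod f A \<in> I"
  by (simp add: prod.remove ideal_mult2)

lemma prime_one: "is_prime_ideal P \<Longrightarrow> 1 \<notin> P"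
  unfolding is_prime_ideal_def is_ideal_def by (metis UNIV_eq_I mult.right_neutral)

lemma prime_mult: "is_prime_ideal P \<Longrightarrow> a \<notin> P \<Longrightarrow> b \<notin> P \<Longrightarrow> a * b \<notin> P"
  unfolding is_prime_ideal_def by blast

lemma prime_ideal: "is_prime_ideal P \<Longrightarrow> is_ideal P"
  unfolding is_prime_ideal_def by blast

lemma prime_power: "is_prime_ideal P \<Longrightarrow> a \<notin> P \<Longrightarrow> a ^ n \<notin> P"
  by (induct n) (auto simp: prime_one prime_mult)

lemma prime_prod_notin: "is_prime_ideal P \<Longrightarrow> (\<And>x. x \<in> A \<Longrightarrow> f x \<notin> P) \<Longrightarrow> prod f A \<notin> P"
  by (induct A rule: infinite_finite_induct) (auto simp: prime_one prime_mult)

lemma ideal_extend: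
  assumes "is_ideal Q"
  shows "is_ideal {q + a * r | q r. q \<in> Q}"
  unfolding is_ideal_def
proof (intro conjI ballI allI)
  have "(0::'a) = 0 + a * 0" by simp
  then show "0 \<in> {q + a * r | q r. q \<in> Q}" using ideal_0[OF assms] by blast
next
  fix x y assume "x \<in> {q + a * r | q r. q \<in> Q}" "y \<in> {q + a * r | q r. q \<in> Q}"
  then obtain q1 r1 q2 r2 where "x = q1 + a * r1" "q1 \<in> Q" "y = q2 + a * r2" "q2 \<in> Q" by blast
  moreover have "x + y = (q1 + q2) + a * (r1 + r2)" using \<open>x = q1 + a * r1\<close> \<open>y = q2 + a * r2\<close> by (simp add: algebra_simps)
  moreover have "q1 + q2 \<in> Q" using assms \<open>q1 \<in> Q\<close> \<open>q2 \<in> Q\<close> by (simp add: ideal_add)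
  ultimately show "x + y \<in> {q + a * r | q r. q \<in> Q}" by blast
next
  fix s x assume "x \<in> {q + a * r | q r. q \<in> Q}"
  then obtain q1 r1 where "x = q1 + a * r1" "q1 \<in> Q" by blast
  moreover have "s * x = (s * q1) + a * (s * r1)" using \<open>x = q1 + a * r1\<close> by (simp add: algebra_simps)
  moreover have "s * q1 \<in> Q" using assms \<open>q1 \<in> Q\<close> by (simp add: ideal_mult)
  ultimately show "s * x \<in> {q + a * r | q r. q \<in> Q}" by blast
qed

lemma exists_prime_avoiding:
  fixes I :: "'a::comm_ring_1 set"
  assumes I: "is_ideal I" and M1: "1 \<in> M" and Mm: "\<And>x y. x \<in> M \<Longrightarrow> y \<in> M \<Longrightarrow> x * y \<in> M"
    and disj: "I \<inter> M = {}"
  shows "\<exists>Q. is_prime_ideal Q \<and> I \<subseteq> Q \<and> Q \<inter> M = {}"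
proof -
  define \<A> where "\<A> = {J. is_ideal J \<and> I \<subseteq> J \<and> J \<inter> M = {}}"
  have "\<exists>Q\<in>\<A>. \<forall>X\<in>\<A>. Q \<subseteq> X \<longrightarrow> X = Q"
  proof (rule subset_Zorn)
    fix C assume ch: "subset.chain \<A> C"
    show "\<exists>U\<in>\<A>. \<forall>X\<in>C. X \<subseteq> U"
    proof (cases "C = {}")
      case True then show ?thesis using I disj by (auto simp: \<A>_def)
    next
      case False
      have CA: "C \<subseteq> \<A>" and cmp: "\<And>X Y. X \<in> C \<Longrightarrow> Y \<in> C \<Longrightarrow> X \<subseteq> Y \<or> Y \<subseteq> X"
        using ch by (auto simp: subset_chain_def)
      have "is_ideal (\<Union>C)"
        unfolding is_ideal_def
      proof (intro conjI ballI allI)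
        obtain X where "X \<in> C" using False by blast
        then show "0 \<in> \<Union>C" using CA ideal_0 unfolding \<A>_def by blast
      next
        fix x y assume "x \<in> \<Union>C" "y \<in> \<Union>C"
        then obtain X Y where XY: "X \<in> C" "Y \<in> C" "x \<in> X" "y \<in> Y" by blast
        show "x + y \<in> \<Union>C"
        proof (cases "X \<subseteq> Y")
          case True then show ?thesis using XY CA by (auto simp: \<A>_def intro!: ideal_add)
        next
          case False then have "Y \<subseteq> X" using cmp XY by blast
          then show ?thesis using XY CA by (auto simp: \<A>_def intro!: ideal_add)
        qed
      next
        fix r x assume "x \<in> \<Union>C"
        then show "r * x \<in> \<Union>C" using CA by (auto simp: \<A>_def intro: ideal_mult)
      qed
      moreover have "I \<subseteq> \<Union>C" using False CA by (auto simp: \<A>_def)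
      moreover have "\<Union>C \<inter> M = {}" using CA by (auto simp: \<A>_def)
      ultimately show ?thesis by (auto simp: \<A>_def)
    qed
  qed
  then obtain Q where QA: "Q \<in> \<A>" and Qmax: "\<And>X. X \<in> \<A> \<Longrightarrow> Q \<subseteq> X \<Longrightarrow> X = Q" by blast
  have Qi: "is_ideal Q" and IQ: "I \<subseteq> Q" and QM: "Q \<inter> M = {}" using QA by (auto simp: \<A>_def)
  have ext: "\<exists>q r. q \<in> Q \<and> q + a * r \<in> M" if "a \<notin> Q" for a
  proof (rule ccontr)
    assume neg: "\<not> ?thesis"
    have sub: "Q \<subseteq> {q + a * r | q r. q \<in> Q}"
    proof
      fix x assume "x \<in> Q"
      moreover have "x = x + a * 0" by simp
      ultimately show "x \<in> {q + a * r | q r. q \<in> Q}" by blast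
    qed
    have "{q + a * r | q r. q \<in> Q} \<inter> M = {}" using neg by blast
    then have "{q + a * r | q r. q \<in> Q} \<in> \<A>"
      using ideal_extend[OF Qi, of a] IQ sub unfolding \<A>_def by (simp add: subset_trans[OF IQ sub])
    moreover note sub
    ultimately have "{q + a * r | q r. q \<in> Q} = Q" using Qmax by blast
    moreover have "a = 0 + a * 1" by simp
    then have "a \<in> {q + a * r | q r. q \<in> Q}" using ideal_0[OF Qi] by blast
    ultimately show False using that by blast
  qed
  have "is_prime_ideal Q"
    unfolding is_prime_ideal_def
  proof (intro conjI allI impI)
    show "is_ideal Q" by fact
    show "Q \<noteq> UNIV" using QM M1 by blast
  next
    fix a b assume ab: "a * b \<in> Q"
    show "a \<in> Q \<or> b \<in> Q"
    proof (rule ccontr)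
      assume "\<not> (a \<in> Q \<or> b \<in> Q)"
      then obtain q1 r1 q2 r2 where h: "q1 \<in> Q" "q1 + a * r1 \<in> M" "q2 \<in> Q" "q2 + b * r2 \<in> M"
        using ext by meson
      have "(q1 + a * r1) * (q2 + b * r2) = q1 * (q2 + b * r2) + q2 * (a * r1) + (a * b) * (r1 * r2)"
        by (simp add: algebra_simps)
      also have "\<dots> \<in> Q" using ideal_mult2[OF Qi h(1)] ideal_mult2[OF Qi h(3)] ideal_mult2[OF Qi ab] Qi
        by (simp add: ideal_add)
      finally show False using Mm[OF h(2) h(4)] QM by blast
    qed
  qed
  then show ?thesis using IQ QM by blast
qed

lemma exists_minimal_prime:
  fixes I :: "'a::comm_ring_1 set"
  assumes Q: "is_prime_ideal Q" and IQ: "I \<subseteq> Q"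
  shows "\<exists>P. minimal_prime_over P I \<and> P \<subseteq> Q"
proof -
  define \<A> where "\<A> = {P. is_prime_ideal P \<and> I \<subseteq> P \<and> P \<subseteq> Q}"
  have "\<exists>M\<in>uminus ` \<A>. \<forall>X\<in>uminus ` \<A>. M \<subseteq> X \<longrightarrow> X = M"
  proof (rule subset_Zorn)
    fix C assume ch: "subset.chain (uminus ` \<A>) C"
    show "\<exists>U\<in>uminus ` \<A>. \<forall>X\<in>C. X \<subseteq> U"
    proof (cases "C = {}")
      case True then show ?thesis using Q IQ by (auto simp: \<A>_def)
    next
      case False
      define D where "D = uminus ` C"
      have DA: "D \<subseteq> \<A>" using ch by (auto simp: subset_chain_def D_def)
      have cmp: "X \<subseteq> Y \<or> Y \<subseteq> X" if XD: "X \<in> D" and YD: "Y \<in> D" for X Y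
      proof -
        obtain X' where "X' \<in> C" "X = - X'" using XD unfolding D_def by blast
        moreover obtain Y' where "Y' \<in> C" "Y = - Y'" using YD unfolding D_def by blast
        moreover have "X' \<subseteq> Y' \<or> Y' \<subseteq> X'" using ch \<open>X' \<in> C\<close> \<open>Y' \<in> C\<close> by (auto simp: subset_chain_def)
        ultimately show ?thesis by auto
      qed
      have DP: "\<And>X. X \<in> D \<Longrightarrow> is_prime_ideal X" using DA by (auto simp: \<A>_def)
      have Dne: "D \<noteq> {}" using False by (simp add: D_def)
      have "is_prime_ideal (\<Inter>D)"
        unfolding is_prime_ideal_def is_ideal_def
      proof (intro conjI ballI allI impI)
        show "0 \<in> \<Inter>D" using DP ideal_0 prime_ideal by blast
        show "\<And>x y. x \<in> \<Inter>D \<Longrightarrow> y \<in> \<Inter>D \<Longrightarrow> x + y \<in> \<Inter>D"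
        proof (rule InterI)
          fix x y X assume "x \<in> \<Inter>D" "y \<in> \<Inter>D" "X \<in> D"
          then show "x + y \<in> X" using DP[of X] ideal_add prime_ideal by blast
        qed
        show "\<And>r x. x \<in> \<Inter>D \<Longrightarrow> r * x \<in> \<Inter>D"
        proof (rule InterI)
          fix r x X assume "x \<in> \<Inter>D" "X \<in> D"
          then show "r * x \<in> X" using DP[of X] ideal_mult prime_ideal by blast
        qed
        show "\<Inter>D \<noteq> UNIV" using DA Dne prime_one unfolding \<A>_def by blast
      next
        fix a b assume ab: "a * b \<in> \<Inter>D"
        show "a \<in> \<Inter>D \<or> b \<in> \<Inter>D"
        proof (rule ccontr)
          assume "\<not> ?thesis"
          then obtain X Y where XY: "X \<in> D" "Y \<in> D" "a \<notin> X" "b \<notin> Y" by blast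
          have pX: "is_prime_ideal X" "is_prime_ideal Y" using XY DA by (auto simp: \<A>_def)
          show False
          proof (cases "X \<subseteq> Y")
            case True
            then show False using prime_mult[OF pX(1), of a b] XY ab by blast
          next
            case False then have "Y \<subseteq> X" using cmp XY by blast
            then show ?thesis using prime_mult[OF pX(2), of a b] XY ab by blast
          qed
        qed
      qed
      moreover have "I \<subseteq> \<Inter>D" using DA by (auto simp: \<A>_def)
      moreover have "\<Inter>D \<subseteq> Q" using DA Dne by (auto simp: \<A>_def)
      ultimately have "\<Inter>D \<in> \<A>" by (simp add: \<A>_def)
      moreover have "\<forall>X\<in>C. X \<subseteq> - \<Inter>D" by (auto simp: D_def)
      ultimately show ?thesis by blast
    qed
  qed
  then obtain M where MA: "M \<in> uminus ` \<A>" and Mmax0: "\<forall>X\<in>uminus ` \<A>. M \<subseteq> X \<longrightarrow> X = M" ..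
  have Mmax: "\<And>X. X \<in> uminus ` \<A> \<Longrightarrow> M \<subseteq> X \<Longrightarrow> X = M" using Mmax0 by (simp only: Ball_def)
  from MA obtain P where PA: "P \<in> \<A>" and MP: "M = - P" by (rule imageE) simp
  have Pmin: "- X = - P" if "X \<in> \<A>" "- P \<subseteq> - X" for X
  proof -
    have "- X \<in> uminus ` \<A>" using that(1) by blast
    then show ?thesis using Mmax[of "- X"] that(2) MP by simp
  qed
  have "minimal_prime_over P I"
    unfolding minimal_prime_over_def
  proof (intro conjI notI)
    show "is_prime_ideal P" "I \<subseteq> P" using PA by (auto simp: \<A>_def)
  next
    assume "\<exists>Q'. is_prime_ideal Q' \<and> I \<subseteq> Q' \<and> Q' \<subset> P"
    then obtain Q' where "is_prime_ideal Q'" "I \<subseteq> Q'" "Q' \<subset> P" by blast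
    moreover then have "Q' \<in> \<A>" using PA by (auto simp: \<A>_def)
    moreover have "- P \<subseteq> - Q'" using \<open>Q' \<subset> P\<close> by blast
    ultimately have "- Q' = - P" using Pmin[of Q'] by blast
    then have "Q' = P" by simp
    then show False using \<open>Q' \<subset> P\<close> by simp
  qed
  then show ?thesis using PA by (auto simp: \<A>_def)
qed


definition colK :: "'a::idom fract \<Rightarrow> 'a set" where
  "colK b = {r. emb r * b \<in> range emb}"

definition blows :: "'a::idom fract set \<Rightarrow> 'a set \<Rightarrow> bool" where
  "blows B P \<longleftrightarrow> (\<exists>(n::nat) q c. (\<forall>k<n. q k \<in> P \<and> c k \<in> B) \<and> (\<Sum>k<n. emb (q k) * c k) = 1)"

definition RP :: "'a::idom set \<Rightarrow> 'a fract set" where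
  "RP P = {f. \<exists>t. t \<notin> P \<and> emb t * f \<in> range emb}"

lemma colK_ideal: "is_ideal (colK b)"
  unfolding is_ideal_def colK_def
proof (intro conjI ballI allI)
  show "0 \<in> {r. emb r * b \<in> range emb}" by (auto simp: emb_0 intro: range_eqI[of _ _ 0])
next
  fix x y assume "x \<in> {r. emb r * b \<in> range emb}" "y \<in> {r. emb r * b \<in> range emb}"
  then obtain u v where "emb x * b = emb u" "emb y * b = emb v" by auto
  then have "emb (x + y) * b = emb (u + v)" by (simp add: emb_add distrib_right)
  then show "x + y \<in> {r. emb r * b \<in> range emb}" by auto
next
  fix r x assume "x \<in> {r. emb r * b \<in> range emb}"
  then obtain u where "emb x * b = emb u" by auto
  then have "emb (r * x) * b = emb (r * u)" by (simp add: emb_mult mult.assoc)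
  then show "r * x \<in> {r. emb r * b \<in> range emb}" by auto
qed

lemma colK_Fract: "z \<noteq> 0 \<Longrightarrow> colK (Fract y z) = colon (principal_ideal z) y"
  unfolding colK_def colon_def principal_ideal_def
proof (intro set_eqI iffI; simp)
  fix r assume z: "z \<noteq> 0"
  {
    assume "emb r * Fract y z \<in> range emb"
    then obtain a where "emb r * Fract y z = emb a" by auto
    then have "Fract (r * y) z = Fract a 1" by (simp add: emb_def)
    then have "r * y = a * z" using z by (simp add: eq_fract)
    then show "\<exists>t. r * y = z * t" by (auto simp: mult.commute)
  }
  {
    assume "\<exists>t. r * y = z * t"
    then obtain t where t: "r * y = z * t" by auto
    then have "emb r * Fract y z = emb t" using z by (simp add: emb_def eq_fract mult.commute)
    then show "emb r * Fract y z \<in> range emb" by (metis rangeI)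
  }
qed

lemma colK_den: "z \<noteq> 0 \<Longrightarrow> z \<in> colK (Fract y z)"
  unfolding colK_def using Fract_emb[of z y] by auto

lemma subring_simps:
  assumes "subring B"
  shows "0 \<in> B" "1 \<in> B" "x \<in> B \<Longrightarrow> y \<in> B \<Longrightarrow> x + y \<in> B" "x \<in> B \<Longrightarrow> y \<in> B \<Longrightarrow> x * y \<in> B"
    "x \<in> B \<Longrightarrow> - x \<in> B"
  using assms by (auto simp: subring_def)

lemma subring_power: "subring B \<Longrightarrow> x \<in> B \<Longrightarrow> x ^ n \<in> B"
  by (induct n) (auto simp: subring_simps)

lemma subring_of_nat: "subring B \<Longrightarrow> of_nat n \<in> B"
  by (induct n) (auto simp: subring_simps)

lemma subring_sum: "subring B \<Longrightarrow> (\<And>x. x \<in> A \<Longrightarrow> f x \<in> B) \<Longrightarrow> sum f A \<in> B"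
  by (induct A rule: infinite_finite_induct) (auto simp: subring_simps)

lemma subring_prod: "subring B \<Longrightarrow> (\<And>x. x \<in> A \<Longrightarrow> f x \<in> B) \<Longrightarrow> prod f A \<in> B"
  by (induct A rule: infinite_finite_induct) (auto simp: subring_simps)

lemma overring_emb: "overring B \<Longrightarrow> emb a \<in> B"
  unfolding overring_def by auto

lemma overring_subring: "overring B \<Longrightarrow> subring B"
  unfolding overring_def by auto

lemma flat_blows:
  assumes fl: "flat_over B" and ov: "overring B" and bB: "b \<in> B" and sub: "colK b \<subseteq> P"
  shows "blows B P"
proof -
  obtain y z where bf: "b = Fract y z" and z: "z \<noteq> 0" by (cases b) auto
  define a :: "nat \<Rightarrow> 'a" where "a = (\<lambda>i. if i = 0 then z else - y)"
  define bb :: "nat \<Rightarrow> 'a fract" where "bb = (\<lambda>i. if i = 0 then b else 1)"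
  have "(\<Sum>i<2. emb (a i) * bb i) = emb z * b + emb (- y)"
    by (simp add: a_def bb_def numeral_2_eq_2)
  also have "\<dots> = 0" using Fract_emb[OF z, of y] by (simp add: bf emb_minus)
  finally have rel: "(\<Sum>i<2. emb (a i) * bb i) = 0" .
  have bbB: "\<forall>i<2. bb i \<in> B" using bB ov by (auto simp: bb_def overring_def subring_def)
  obtain m :: nat and c d where cB: "\<forall>j<m. c j \<in> B" and rep: "\<forall>i<2. bb i = (\<Sum>j<m. emb (d i j) * c j)"
    and rel2: "\<forall>j<m. (\<Sum>i<2. a i * d i j) = 0"
    using fl[unfolded flat_over_def, rule_format, of 2 bb a] bbB rel by blast
  have one: "1 = (\<Sum>j<m. emb (d 1 j) * c j)" using rep[rule_format, of 1] by (simp add: bb_def)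
  have "d 1 j \<in> colK b" if "j < m" for j
  proof -
    have "z * d 0 j - y * d 1 j = 0" using rel2[rule_format, OF that]
      by (simp add: a_def numeral_2_eq_2)
    then have "z * d 0 j = y * d 1 j" by simp
    then have "emb (d 1 j) * b = emb (d 0 j)" using z
      by (simp add: bf emb_def eq_fract mult.commute)
    then show ?thesis unfolding colK_def by (metis (mono_tags) mem_Collect_eq rangeI)
  qed
  then show ?thesis unfolding blows_def using sub cB one
    by (intro exI[of _ m] exI[of _ "d 1"] exI[of _ c]) auto
qed

lemma RP_subring:
  fixes P :: "'a::idom set"
  assumes P: "is_prime_ideal P"
  shows "subring (RP P)" "range emb \<subseteq> RP P"
proof -
  have one: "1 \<notin> P" using prime_one[OF P] .
  show "range emb \<subseteq> RP P"
  proof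
    fix f :: "'a fract" assume "f \<in> range emb"
    then have "emb 1 * f \<in> range emb" by (simp add: emb_1)
    then show "f \<in> RP P" using one unfolding RP_def by blast
  qed
  then have e: "emb a \<in> RP P" for a by auto
  show "subring (RP P)"
    unfolding subring_def
  proof (intro conjI)
    show "0 \<in> RP P" using e[of 0] by (simp add: emb_0)
    show "1 \<in> RP P" using e[of 1] by (simp add: emb_1)
  next
    show "\<forall>x\<in>RP P. \<forall>y\<in>RP P. x + y \<in> RP P \<and> x * y \<in> RP P \<and> - x \<in> RP P"
    proof (intro ballI)
    fix x y assume "x \<in> RP P" "y \<in> RP P"
    then obtain s t u v where st: "s \<notin> P" "emb s * x = emb u" "t \<notin> P" "emb t * y = emb v"
      unfolding RP_def by (auto simp: image_iff)
    have st1: "s * t \<notin> P" using st prime_mult[OF P] by blast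
    have "emb (s * t) * (x + y) = emb t * (emb s * x) + emb s * (emb t * y)"
      by (simp add: emb_mult algebra_simps)
    then have e1: "emb (s * t) * (x + y) = emb (t * u + s * v)" using st by (simp add: emb_mult emb_add)
    have "emb (s * t) * (x * y) = (emb s * x) * (emb t * y)"
      by (simp add: emb_mult ac_simps)
    then have e2: "emb (s * t) * (x * y) = emb (u * v)" using st by (simp add: emb_mult)
    have e3: "emb s * (- x) = emb (- u)"
      using st by (simp add: emb_minus)
    have "x + y \<in> RP P" unfolding RP_def using st1 e1 by (auto intro!: exI[of _ "s * t"])
    moreover have "x * y \<in> RP P" unfolding RP_def using st1 e2 by (auto intro!: exI[of _ "s * t"])
    moreover have "- x \<in> RP P" unfolding RP_def using st(1) e3 by (auto intro!: exI[of _ s])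
    ultimately show "x + y \<in> RP P \<and> x * y \<in> RP P \<and> - x \<in> RP P" by blast
  qed
  qed
qed

lemma blows_not_RP:
  assumes P: "is_prime_ideal P" and bl: "blows B P" and sub: "B \<subseteq> RP P"
  shows False
proof -
  obtain n :: nat and q c where qc: "\<forall>k<n. q k \<in> P \<and> c k \<in> B" and s1: "(\<Sum>k<n. emb (q k) * c k) = 1"
    using bl unfolding blows_def by blast
  have "\<forall>m\<le>n. \<exists>t a. t \<notin> P \<and> a \<in> P \<and> emb t * (\<Sum>k<m. emb (q k) * c k) = emb a"
  proof (intro allI impI)
    fix m assume "m \<le> n"
    then show "\<exists>t a. t \<notin> P \<and> a \<in> P \<and> emb t * (\<Sum>k<m. emb (q k) * c k) = emb a"
    proof (induct m)
      case 0
      show ?case using prime_one[OF P] ideal_0[OF prime_ideal[OF P]]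
        by (intro exI[of _ 1] exI[of _ 0]) (simp add: emb_0)
    next
      case (Suc m)
      then obtain t a where ta: "t \<notin> P" "a \<in> P" "emb t * (\<Sum>k<m. emb (q k) * c k) = emb a" by auto
      have "c m \<in> RP P" using qc sub Suc by auto
      then obtain s u where su: "s \<notin> P" "emb s * c m = emb u" unfolding RP_def by blast
      have "emb (t * s) * (\<Sum>k<Suc m. emb (q k) * c k) = emb s * (emb t * (\<Sum>k<m. emb (q k) * c k)) + emb t * emb (q m) * (emb s * c m)"
        by (simp add: emb_mult algebra_simps)
      then have "emb (t * s) * (\<Sum>k<Suc m. emb (q k) * c k) = emb (s * a + t * (q m * u))"
        using ta su by (simp add: emb_mult emb_add)
      moreover have "t * s \<notin> P" using ta su prime_mult[OF P] by blast
      moreover have "s * a + t * (q m * u) \<in> P"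
      proof -
        have "q m \<in> P" using qc Suc by auto
        then show ?thesis using ta(2) prime_ideal[OF P] by (simp add: ideal_add ideal_mult ideal_mult2)
      qed
      ultimately show ?case by blast
    qed
  qed
  then obtain t a where "t \<notin> P" "a \<in> P" "emb t * 1 = emb a" using s1 by fastforce
  then show False by (simp add: emb_inj)
qed

lemma alg_generated_sub: "subring R \<Longrightarrow> range emb \<subseteq> R \<Longrightarrow> S \<subseteq> R \<Longrightarrow> alg_generated S \<subseteq> R"
  unfolding alg_generated_def by blast

lemma blows_gen:
  assumes P: "is_prime_ideal P" and bl: "blows B P" and BS: "B = alg_generated Sg"
  shows "\<exists>g\<in>Sg. colK g \<subseteq> P"
proof (rule ccontr)
  assume "\<not> ?thesis"
  then have "Sg \<subseteq> RP P" unfolding RP_def colK_def by blast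
  then have "B \<subseteq> RP P" using BS alg_generated_sub RP_subring[OF P] by blast
  then show False using blows_not_RP[OF P bl] by blast
qed


abbreviation hyp :: "'a::idom itself \<Rightarrow> bool" where
  "hyp TYPE('a) \<equiv> (\<forall>x::'a. x \<noteq> 0 \<longrightarrow>
             finite {P. associated_prime (principal_ideal x) P} \<and>
             (\<forall>P. associated_prime (principal_ideal x) P \<longrightarrow> height_one P))"

lemma zero_prime: "is_prime_ideal ({0} :: 'a::idom set)"
proof -
  have "(1::'a) \<notin> {0}" by simp
  then have "{0::'a} \<noteq> UNIV" by blast
  then show ?thesis unfolding is_prime_ideal_def is_ideal_def by simp
qed

lemma chain2:
  fixes P :: "'a::idom set"
  assumes "is_prime_ideal Q" "is_prime_ideal P" "Q \<subset> P" "x \<in> Q" "x \<noteq> 0"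
  shows "prime_chain_to P 2"
proof -
  define C where "C = (\<lambda>i::nat. if i = 0 then {0} else if i = 1 then Q else P)"
  have "0 \<in> Q" using assms(1) by (simp add: ideal_0 prime_ideal)
  then have "{0} \<subset> Q" using assms(4,5) by auto
  then have "\<forall>i<2. C i \<subset> C (Suc i)" using assms(3) unfolding C_def
    by (intro allI impI, simp only: less_2_cases_iff) auto
  moreover have "\<forall>i\<le>2. is_prime_ideal (C i)" unfolding C_def
  proof (intro allI impI)
    fix i :: nat assume "i \<le> 2"
    show "is_prime_ideal (if i = 0 then {0} else if i = 1 then Q else P)"
      using assms(1,2) zero_prime by auto
  qed
  moreover have "C 2 = P" by (simp add: C_def)
  ultimately show ?thesis unfolding prime_chain_to_def by blast
qed

lemma ho_prime: "height_one P \<Longrightarrow> is_prime_ideal P"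
  by (simp add: height_one_def)

lemma ho_nonzero:
  assumes "height_one (P :: 'a::idom set)" shows "\<exists>x\<in>P. x \<noteq> 0"
proof -
  have "prime_chain_to P 1" using assms by (simp add: height_one_def)
  then obtain C :: "nat \<Rightarrow> 'a set" where C: "\<forall>i\<le>1. is_prime_ideal (C i)" "\<forall>i<1. C i \<subset> C (Suc i)" "C 1 = P"
    unfolding prime_chain_to_def by blast
  have "is_prime_ideal (C 0)" using C(1) by simp
  moreover have "C 0 \<subset> C 1" using C(2) by simp
  ultimately have "is_prime_ideal (C 0)" "C 0 \<subset> P" using C(3) by auto
  then obtain x where "x \<in> P" "x \<notin> C 0" by blast
  moreover have "0 \<in> C 0" using \<open>is_prime_ideal (C 0)\<close> by (simp add: ideal_0 prime_ideal)
  ultimately have "x \<noteq> 0" by metis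
  then show ?thesis using \<open>x \<in> P\<close> by blast
qed

lemma ho_min:
  fixes P :: "'a::idom set"
  assumes "height_one P" "I \<subseteq> P" "x \<in> I" "x \<noteq> 0"
  shows "minimal_prime_over P I"
  unfolding minimal_prime_over_def
proof (intro conjI notI)
  show "is_prime_ideal P" "I \<subseteq> P" using assms by (auto simp: height_one_def)
next
  assume "\<exists>Q. is_prime_ideal Q \<and> I \<subseteq> Q \<and> Q \<subset> P"
  then obtain Q where "is_prime_ideal Q" "I \<subseteq> Q" "Q \<subset> P" by blast
  then have "prime_chain_to P 2" using chain2[of Q P x] assms by (auto simp: height_one_def)
  then show False using assms by (simp add: height_one_def)
qed

lemma ho_incomp:
  fixes P :: "'a::idom set"
  assumes "height_one P" "height_one P'" "P \<subseteq> P'"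
  shows "P = P'"
proof (rule ccontr)
  assume "P \<noteq> P'"
  then have "P \<subset> P'" using assms(3) by blast
  obtain x where "x \<in> P" "x \<noteq> 0" using ho_nonzero[OF assms(1)] by blast
  then have "prime_chain_to P' 2" using chain2[of P P' x] \<open>P \<subset> P'\<close> assms by (auto simp: height_one_def)
  then show False using assms by (simp add: height_one_def)
qed

lemma assoc_colK:
  assumes "z \<noteq> 0" "minimal_prime_over P (colK (Fract y z))"
  shows "associated_prime (principal_ideal z) P"
  using assms colK_Fract[OF assms(1)] unfolding associated_prime_def by auto

definition Fset :: "'a::idom fract set \<Rightarrow> 'a set set" where
  "Fset B = {P. height_one P \<and> blows B P}"

lemma min_colK_Fset:
  fixes B :: "'a::idom fract set"
  assumes H: "hyp TYPE('a)" and fl: "flat_over B" and ov: "overring B" and bB: "b \<in> B"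
    and m: "minimal_prime_over P (colK b)"
  shows "P \<in> Fset B"
proof -
  obtain y z where bf: "b = Fract y z" and z: "z \<noteq> 0" by (cases b) auto
  have "associated_prime (principal_ideal z) P" using assoc_colK[OF z] m bf by simp
  then have "height_one P" using H z by blast
  moreover have "blows B P" using flat_blows[OF fl ov bB] m by (simp add: minimal_prime_over_def)
  ultimately show ?thesis by (simp add: Fset_def)
qed

lemma Fset_finite:
  fixes B :: "'a::idom fract set"
  assumes H: "hyp TYPE('a)" and fg: "finitely_generated_algebra B"
  shows "finite (Fset B)"
proof -
  obtain Sg where Sg: "finite Sg" "B = alg_generated Sg" using fg unfolding finitely_generated_algebra_def by blast
  have "\<forall>g::'a fract. \<exists>yz. g = Fract (fst yz) (snd yz) \<and> snd yz \<noteq> 0"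
  proof
    fix g :: "'a fract"
    obtain a b where "g = Fract a b" "b \<noteq> 0" by (cases g)
    then show "\<exists>yz. g = Fract (fst yz) (snd yz) \<and> snd yz \<noteq> 0"
      by (intro exI[of _ "(a, b)"]) simp
  qed
  from choice[OF this] obtain f :: "'a fract \<Rightarrow> 'a \<times> 'a" where f0: "\<forall>g. g = Fract (fst (f g)) (snd (f g)) \<and> snd (f g) \<noteq> 0" by blast
  then have f: "\<And>g. g = Fract (fst (f g)) (snd (f g)) \<and> snd (f g) \<noteq> 0" by blast
  have "Fset B \<subseteq> (\<Union>g\<in>Sg. {P. associated_prime (principal_ideal (snd (f g))) P})"
  proof
    fix P assume P: "P \<in> Fset B"
    then have ho: "height_one P" and bl: "blows B P" by (auto simp: Fset_def)
    obtain g where g: "g \<in> Sg" "colK g \<subseteq> P" using blows_gen[OF ho_prime[OF ho] bl Sg(2)] by blast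
    have z: "snd (f g) \<noteq> 0" using f by blast
    have gE: "colK g = colK (Fract (fst (f g)) (snd (f g)))" using f[of g] by (metis (no_types))
    have "snd (f g) \<in> colK g" using colK_den[OF z, of "fst (f g)"] gE by simp
    then have "minimal_prime_over P (colK g)" using ho_min[OF ho g(2)] z by blast
    then have "associated_prime (principal_ideal (snd (f g))) P" using assoc_colK[OF z] gE by simp
    then show "P \<in> (\<Union>g\<in>Sg. {P. associated_prime (principal_ideal (snd (f g))) P})" using g by blast
  qed
  moreover have "finite (\<Union>g\<in>Sg. {P. associated_prime (principal_ideal (snd (f g))) P})"
  proof (rule finite_UN_I[OF Sg(1)])
    fix g have "snd (f g) \<noteq> 0" using f by blast
    then show "finite {P. associated_prime (principal_ideal (snd (f g))) P}" using H by simp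
  qed
  ultimately show ?thesis by (rule finite_subset)
qed


lemma principal_ideal_ideal: "is_ideal (principal_ideal (p::'a::comm_ring_1))"
  unfolding is_ideal_def principal_ideal_def
proof (intro conjI ballI allI)
  show "0 \<in> {p * r |r. True}" by (auto intro: exI[of _ 0])
next
  fix x y assume "x \<in> {p * r |r. True}" "y \<in> {p * r |r. True}"
  then obtain r s where "x = p * r" "y = p * s" by blast
  then have "x + y = p * (r + s)" by (simp add: algebra_simps)
  then show "x + y \<in> {p * r |r. True}" by blast
next
  fix c x assume "x \<in> {p * r |r. True}"
  then obtain r where "x = p * r" by blast
  then have "c * x = p * (c * r)" by (simp add: algebra_simps)
  then show "c * x \<in> {p * r |r. True}" by blast
qed

lemma radical_loc:
  fixes P :: "'a::idom set"
  assumes ho: "height_one P" and pP: "p \<in> P" and p0: "p \<noteq> 0" and qP: "q \<in> P"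
  shows "\<exists>k r. r \<notin> P \<and> r * q ^ k \<in> principal_ideal p"
proof (rule ccontr)
  assume neg: "\<not> ?thesis"
  have P: "is_prime_ideal P" using ho by (rule ho_prime)
  define M where "M = {r * q ^ k | r k. r \<notin> P}"
  have "(1::'a) = 1 * q ^ 0" by simp
  then have M1: "1 \<in> M" unfolding M_def using prime_one[OF P] by blast
  have Mm: "x * y \<in> M" if xy: "x \<in> M" "y \<in> M" for x y
  proof -
    obtain r k s l where "x = r * q ^ k" "r \<notin> P" "y = s * q ^ l" "s \<notin> P"
      using xy unfolding M_def by blast
    then have "x * y = (r * s) * q ^ (k + l)" "r * s \<notin> P"
      using prime_mult[OF P] by (auto simp: power_add ac_simps)
    then show ?thesis unfolding M_def by blast
  qed
  have disj: "principal_ideal p \<inter> M = {}" using neg unfolding M_def by blast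
  obtain Q where Q: "is_prime_ideal Q" "principal_ideal p \<subseteq> Q" "Q \<inter> M = {}"
    using exists_prime_avoiding[OF principal_ideal_ideal M1 Mm disj] by blast
  have "Q \<subseteq> P"
  proof
    fix x assume "x \<in> Q"
    show "x \<in> P"
    proof (rule ccontr)
      assume "x \<notin> P"
      then have "x * q ^ 0 \<in> M" unfolding M_def by blast
      then show False using \<open>x \<in> Q\<close> Q(3) by auto
    qed
  qed
  moreover have "q \<notin> Q"
  proof
    assume "q \<in> Q"
    moreover have "1 * q ^ 1 \<in> M" unfolding M_def using prime_one[OF P] by blast
    ultimately show False using Q(3) by auto
  qed
  ultimately have "Q \<subset> P" using qP by blast
  moreover have "p \<in> Q" using Q(2) unfolding principal_ideal_def by (force intro: exI[of _ 1])
  ultimately have "prime_chain_to P 2" using chain2[OF Q(1) P _ _ p0] by blast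
  then show False using ho by (simp add: height_one_def)
qed

lemma X_sum:
  assumes X0: "0 \<in> X" and Xadd: "\<And>x y. x \<in> X \<Longrightarrow> y \<in> X \<Longrightarrow> x + y \<in> X"
  shows "(\<And>i. i \<in> A \<Longrightarrow> f i \<in> X) \<Longrightarrow> sum f A \<in> X"
  by (induct A rule: infinite_finite_induct) (auto simp: X0 Xadd)

lemma rad_add:
  fixes B X :: "'b::comm_ring_1 set"
  assumes sB: "subring B" and XB: "X \<subseteq> B" and X0: "0 \<in> X"
    and Xadd: "\<And>x y. x \<in> X \<Longrightarrow> y \<in> X \<Longrightarrow> x + y \<in> X"
    and Xmul: "\<And>c x. c \<in> B \<Longrightarrow> x \<in> X \<Longrightarrow> c * x \<in> X"
    and a: "a \<in> B" "a ^ m \<in> X" and b: "b \<in> B" "b ^ n \<in> X"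
  shows "(a + b) ^ (m + n) \<in> X"
proof -
  have "(a + b) ^ (m + n) = (\<Sum>k\<le>m + n. of_nat ((m + n) choose k) * a ^ k * b ^ (m + n - k))"
    by (rule binomial_ring)
  also have "\<dots> \<in> X"
  proof (rule X_sum[OF X0 Xadd])
    fix k assume "k \<in> {..m + n}"
    show "of_nat ((m + n) choose k) * a ^ k * b ^ (m + n - k) \<in> X"
    proof (cases "m \<le> k")
      case True
      then have "a ^ k = a ^ (k - m) * a ^ m" by (simp add: power_add[symmetric])
      then have "of_nat ((m + n) choose k) * a ^ k * b ^ (m + n - k)
          = (of_nat ((m + n) choose k) * a ^ (k - m) * b ^ (m + n - k)) * a ^ m" by (simp add: ac_simps)
      moreover have "of_nat ((m + n) choose k) * a ^ (k - m) * b ^ (m + n - k) \<in> B"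
        using sB a b by (simp add: subring_simps subring_power subring_of_nat)
      ultimately show ?thesis using Xmul a(2) by simp
    next
      case False
      then have "m + n - k = (m - k) + n" by simp
      then have "b ^ (m + n - k) = b ^ ((m - k) + n)" by simp
      also have "\<dots> = b ^ (m - k) * b ^ n" by (rule power_add)
      finally have "b ^ (m + n - k) = b ^ (m - k) * b ^ n" .
      then have "of_nat ((m + n) choose k) * a ^ k * b ^ (m + n - k)
          = (of_nat ((m + n) choose k) * a ^ k * b ^ (m - k)) * b ^ n" by (simp add: ac_simps)
      moreover have "of_nat ((m + n) choose k) * a ^ k * b ^ (m - k) \<in> B"
        using sB a b by (simp add: subring_simps subring_power subring_of_nat)
      ultimately show ?thesis using Xmul b(2) by simp
    qed
  qed
  finally show ?thesis .
qed

lemma step_ii: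
  fixes B :: "'a::idom fract set"
  assumes ov: "overring B" and PF: "P \<in> Fset B" and pP: "p \<in> P" and p0: "p \<noteq> 0"
  shows "\<exists>t \<gamma>. t \<notin> P \<and> \<gamma> \<in> B \<and> emb t = emb p * \<gamma>"
proof -
  have ho: "height_one P" and bl: "blows B P" using PF by (auto simp: Fset_def)
  have P: "is_prime_ideal P" using ho by (rule ho_prime)
  have sB: "subring B" using ov by (rule overring_subring)
  define X where "X = {\<beta> \<in> B. \<exists>r \<gamma>. r \<notin> P \<and> \<gamma> \<in> B \<and> emb r * \<beta> = emb p * \<gamma>}"
  have XB: "X \<subseteq> B" unfolding X_def by blast
  have "emb 1 * 0 = emb p * 0" by simp
  then have X0: "0 \<in> X" unfolding X_def using prime_one[OF P] sB subring_simps(1)[OF sB] by blast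
  have Xadd: "x + y \<in> X" if xy: "x \<in> X" "y \<in> X" for x y
  proof -
    obtain r1 g1 where 1: "x \<in> B" "r1 \<notin> P" "g1 \<in> B" "emb r1 * x = emb p * g1" using xy(1) unfolding X_def by blast
    obtain r2 g2 where 2: "y \<in> B" "r2 \<notin> P" "g2 \<in> B" "emb r2 * y = emb p * g2" using xy(2) unfolding X_def by blast
    have "emb (r1 * r2) * (x + y) = emb r2 * (emb r1 * x) + emb r1 * (emb r2 * y)"
      by (simp add: emb_mult algebra_simps)
    also have "\<dots> = emb p * (emb r2 * g1 + emb r1 * g2)" using 1 2 by (simp add: algebra_simps)
    finally have "emb (r1 * r2) * (x + y) = emb p * (emb r2 * g1 + emb r1 * g2)" .
    moreover have "r1 * r2 \<notin> P" using 1 2 prime_mult[OF P] by blast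
    moreover have "emb r2 * g1 + emb r1 * g2 \<in> B" using 1 2 sB ov by (simp add: subring_simps overring_emb)
    moreover have "x + y \<in> B" using 1 2 sB by (simp add: subring_simps)
    ultimately show ?thesis unfolding X_def by blast
  qed
  have Xmul: "c * x \<in> X" if cx: "c \<in> B" "x \<in> X" for c x
  proof -
    obtain r1 g1 where 1: "x \<in> B" "r1 \<notin> P" "g1 \<in> B" "emb r1 * x = emb p * g1" using cx(2) unfolding X_def by blast
    have "emb r1 * (c * x) = emb p * (c * g1)" using 1 by (simp add: algebra_simps)
    moreover have "c * g1 \<in> B" "c * x \<in> B" using 1 cx sB by (simp_all add: subring_simps)
    ultimately show ?thesis using 1 unfolding X_def by blast
  qed
  define R where "R = {\<beta> \<in> B. \<exists>k. \<beta> ^ k \<in> X}"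
  have R0: "0 \<in> R" unfolding R_def using X0 sB by (auto simp: subring_simps intro!: exI[of _ 1])
  have Radd: "x + y \<in> R" if xy: "x \<in> R" "y \<in> R" for x y
  proof -
    obtain m n where "x \<in> B" "x ^ m \<in> X" "y \<in> B" "y ^ n \<in> X" using xy unfolding R_def by blast
    then have "(x + y) ^ (m + n) \<in> X" by (intro rad_add[OF sB XB X0 Xadd Xmul]) auto
    then show ?thesis unfolding R_def using \<open>x \<in> B\<close> \<open>y \<in> B\<close> sB by (auto simp: subring_simps)
  qed
  have Rmul: "c * x \<in> R" if cx: "c \<in> B" "x \<in> R" for c x
  proof -
    obtain m where "x \<in> B" "x ^ m \<in> X" using cx unfolding R_def by blast
    then have "c ^ m * x ^ m \<in> X" using Xmul sB cx(1) subring_power by blast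
    then have "(c * x) ^ m \<in> X" by (simp add: power_mult_distrib)
    then show ?thesis unfolding R_def using \<open>x \<in> B\<close> cx(1) sB by (auto simp: subring_simps)
  qed
  have RP: "emb q \<in> R" if qP: "q \<in> P" for q
  proof -
    obtain k r where "r \<notin> P" "r * q ^ k \<in> principal_ideal p" using radical_loc[OF ho pP p0 qP] by blast
    then obtain a where a: "r * q ^ k = p * a" unfolding principal_ideal_def by blast
    have "emb r * (emb q ^ k) = emb p * emb a" using a by (metis emb_mult emb_power)
    then have "emb q ^ k \<in> X" unfolding X_def using \<open>r \<notin> P\<close> ov sB
      by (auto simp: overring_emb subring_power intro!: exI[of _ r] exI[of _ "emb a"])
    then show ?thesis unfolding R_def using ov by (auto simp: overring_emb)
  qed
  obtain n :: nat and q c where qc: "\<forall>k<n. q k \<in> P \<and> c k \<in> B" and s1: "(\<Sum>k<n. emb (q k) * c k) = 1"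
    using bl unfolding blows_def by blast
  have "(\<Sum>k<n. emb (q k) * c k) \<in> R"
  proof (rule X_sum[OF R0 Radd])
    fix k assume "k \<in> {..<n}"
    then have "c k \<in> B" "emb (q k) \<in> R" using qc RP by auto
    then show "emb (q k) * c k \<in> R" using Rmul by (simp add: mult.commute)
  qed
  then have "1 \<in> R" using s1 by simp
  then have "1 \<in> X" unfolding R_def by auto
  then show ?thesis unfolding X_def by (auto simp: emb_1)
qed


lemma avoid_elem:
  fixes P :: "'a::idom set"
  assumes ho: "height_one P" and fin: "finite G" and hoG: "\<And>Q. Q \<in> G \<Longrightarrow> height_one Q"
    and PG: "P \<notin> G"
  shows "\<exists>p\<in>P. p \<noteq> 0 \<and> (\<forall>Q\<in>G. p \<notin> Q)"
proof (cases "G = {}")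
  case True then show ?thesis using ho_nonzero[OF ho] by blast
next
  case False
  have P: "is_prime_ideal P" using ho by (rule ho_prime)
  have ncont: "\<exists>x. x \<in> Q' \<and> x \<notin> Q" if "Q \<in> insert P G" "Q' \<in> insert P G" "Q \<noteq> Q'" for Q Q'
  proof -
    have "height_one Q" "height_one Q'" using that ho hoG by auto
    then have "\<not> Q' \<subseteq> Q" using ho_incomp that(3) by blast
    then show ?thesis by blast
  qed
  have "\<forall>QQ. \<exists>x. (fst QQ \<in> insert P G \<and> snd QQ \<in> insert P G \<and> fst QQ \<noteq> snd QQ) \<longrightarrow> x \<in> snd QQ \<and> x \<notin> fst QQ"
    using ncont by blast
  from choice[OF this] obtain f :: "'a set \<times> 'a set \<Rightarrow> 'a" where
    f: "\<forall>QQ. (fst QQ \<in> insert P G \<and> snd QQ \<in> insert P G \<and> fst QQ \<noteq> snd QQ) \<longrightarrow> f QQ \<in> snd QQ \<and> f QQ \<notin> fst QQ"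
    by blast
  define e where "e = (\<lambda>Q Q'. f (Q, Q'))"
  have e: "\<And>Q Q'. Q \<in> insert P G \<Longrightarrow> Q' \<in> insert P G \<Longrightarrow> Q \<noteq> Q' \<Longrightarrow> e Q Q' \<in> Q' \<and> e Q Q' \<notin> Q"
    unfolding e_def using f by auto
  define a where "a = (\<lambda>Q. e Q P * (\<Prod>Q'\<in>G - {Q}. e Q Q'))"
  define p where "p = (\<Sum>Q\<in>G. a Q)"
  have PiG: "Q \<in> G \<Longrightarrow> Q \<noteq> P" for Q using PG by blast
  have primeG: "Q \<in> G \<Longrightarrow> is_prime_ideal Q" for Q using hoG ho_prime by blast
  have "p \<in> P" unfolding p_def
  proof (rule ideal_sum[OF prime_ideal[OF P]])
    fix Q assume "Q \<in> G"
    then have "e Q P \<in> P" using e[of Q P] PiG by blast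
    then show "a Q \<in> P" unfolding a_def using prime_ideal[OF P] by (simp add: ideal_mult2)
  qed
  moreover have "p \<notin> Q0" if Q0: "Q0 \<in> G" for Q0
  proof
    assume pQ: "p \<in> Q0"
    have Q0p: "is_prime_ideal Q0" using primeG Q0 .
    have "p = a Q0 + (\<Sum>Q\<in>G - {Q0}. a Q)" unfolding p_def using fin Q0 by (simp add: sum.remove)
    moreover have "(\<Sum>Q\<in>G - {Q0}. a Q) \<in> Q0"
    proof (rule ideal_sum[OF prime_ideal[OF Q0p]])
      fix Q assume Q: "Q \<in> G - {Q0}"
      have "e Q Q0 \<in> Q0" using e[of Q Q0] Q Q0 by blast
      then have "(\<Prod>Q'\<in>G - {Q}. e Q Q') \<in> Q0"
        using ideal_prod_in[OF prime_ideal[OF Q0p], of "G - {Q}" Q0 "e Q"] fin Q Q0 by blast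
      then show "a Q \<in> Q0" unfolding a_def using prime_ideal[OF Q0p] by (simp add: ideal_mult)
    qed
    ultimately have "a Q0 = p + - (\<Sum>Q\<in>G - {Q0}. a Q)" "- (\<Sum>Q\<in>G - {Q0}. a Q) \<in> Q0"
      using ideal_minus[OF prime_ideal[OF Q0p]] by auto
    then have "a Q0 \<in> Q0" using pQ ideal_add[OF prime_ideal[OF Q0p]] by metis
    moreover have "a Q0 \<notin> Q0"
    proof -
      have "e Q0 P \<notin> Q0" using e[of Q0 P] Q0 PiG by blast
      moreover have "(\<Prod>Q'\<in>G - {Q0}. e Q0 Q') \<notin> Q0"
        by (rule prime_prod_notin[OF Q0p]) (use e Q0 in blast)
      ultimately show ?thesis unfolding a_def using prime_mult[OF Q0p] by blast
    qed
    ultimately show False by blast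
  qed
  moreover have "p \<noteq> 0"
  proof
    assume "p = 0"
    obtain Q0 where "Q0 \<in> G" using False by blast
    then show False using \<open>p = 0\<close> calculation(2)[OF \<open>Q0 \<in> G\<close>] primeG[OF \<open>Q0 \<in> G\<close>]
      by (simp add: ideal_0 prime_ideal)
  qed
  ultimately show ?thesis by blast
qed

lemma eps_elem:
  fixes P :: "'a::idom set"
  assumes ho: "height_one P" and fin: "finite G" and hoG: "\<And>Q. Q \<in> G \<Longrightarrow> height_one Q"
    and PG: "P \<notin> G"
  shows "\<exists>\<epsilon>. \<epsilon> \<notin> P \<and> (\<forall>Q\<in>G. \<epsilon> \<in> Q)"
proof -
  have P: "is_prime_ideal P" using ho by (rule ho_prime)
  have "\<forall>Q. \<exists>x. Q \<in> G \<longrightarrow> x \<in> Q \<and> x \<notin> P"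
  proof
    fix Q show "\<exists>x. Q \<in> G \<longrightarrow> x \<in> Q \<and> x \<notin> P"
    proof (cases "Q \<in> G")
      case True
      then have "\<not> Q \<subseteq> P" using ho_incomp[of Q P] hoG ho PG by blast
      then show ?thesis by blast
    qed simp
  qed
  from choice[OF this] obtain e :: "'a set \<Rightarrow> 'a" where e0: "\<forall>Q. Q \<in> G \<longrightarrow> e Q \<in> Q \<and> e Q \<notin> P" by blast
  then have e: "\<And>Q. Q \<in> G \<Longrightarrow> e Q \<in> Q \<and> e Q \<notin> P" by blast
  have "prod e G \<notin> P" by (rule prime_prod_notin[OF P]) (use e in blast)
  moreover have "prod e G \<in> Q" if "Q \<in> G" for Q
    using ideal_prod_in[OF prime_ideal[OF ho_prime[OF hoG[OF that]]] fin that] e[OF that] by blast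
  ultimately show ?thesis by blast
qed

lemma unit_in_P:
  fixes B :: "'a::idom fract set"
  assumes H: "hyp TYPE('a)" and fl: "flat_over B" and ov: "overring B" and wc: "well_centered B"
    and fin: "finite (Fset B)" and PF: "P \<in> Fset B"
  shows "\<exists>v. emb v \<in> B \<and> (\<exists>w\<in>B. emb v * w = 1) \<and> v \<in> P"
proof -
  define G where "G = Fset B - {P}"
  have ho: "height_one P" using PF by (simp add: Fset_def)
  have P: "is_prime_ideal P" using ho by (rule ho_prime)
  have sB: "subring B" using ov by (rule overring_subring)
  have finG: "finite G" using fin by (simp add: G_def)
  have hoG: "\<And>Q. Q \<in> G \<Longrightarrow> height_one Q" by (simp add: G_def Fset_def)
  have PG: "P \<notin> G" by (simp add: G_def)
  obtain p where p: "p \<in> P" "p \<noteq> 0" "\<And>Q. Q \<in> G \<Longrightarrow> p \<notin> Q" using avoid_elem[OF ho finG hoG PG] by blast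
  obtain \<epsilon> where eps: "\<epsilon> \<notin> P" "\<And>Q. Q \<in> G \<Longrightarrow> \<epsilon> \<in> Q" using eps_elem[OF ho finG hoG PG] by blast
  obtain t \<gamma> where t: "t \<notin> P" "\<gamma> \<in> B" "emb t = emb p * \<gamma>" using step_ii[OF ov PF p(1,2)] by blast
  define b' where "b' = 1 + emb \<epsilon> * \<gamma>"
  have b'B: "b' \<in> B" unfolding b'_def using sB ov t(2) by (simp add: subring_simps overring_emb)
  define d where "d = p + \<epsilon> * t"
  have pb': "emb p * b' = emb d" unfolding b'_def d_def using t(3)
    by (simp add: emb_add emb_mult algebra_simps)
  obtain u where u: "unit_of B u" "u * b' \<in> range emb" using wc b'B unfolding well_centered_def by blast
  obtain a where a: "u * b' = emb a" using u(2) by blast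
  have dP: "d \<notin> P"
  proof
    assume "d \<in> P"
    have "- p \<in> P" using p(1) prime_ideal[OF P] ideal_minus by blast
    then have "d + - p \<in> P" using \<open>d \<in> P\<close> prime_ideal[OF P] ideal_add by blast
    then have "\<epsilon> * t \<in> P" by (simp add: d_def)
    then show False using prime_mult[OF P eps(1) t(1)] by blast
  qed
  have dG: "d \<notin> Q" if Q: "Q \<in> G" for Q
  proof
    assume "d \<in> Q"
    have Qp: "is_prime_ideal Q" using hoG[OF Q] by (rule ho_prime)
    have "\<epsilon> * t \<in> Q" using eps(2)[OF Q] prime_ideal[OF Qp] by (simp add: ideal_mult2)
    then have "- (\<epsilon> * t) \<in> Q" using prime_ideal[OF Qp] ideal_minus by blast
    then have "d + - (\<epsilon> * t) \<in> Q" using \<open>d \<in> Q\<close> prime_ideal[OF Qp] ideal_add by blast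
    then show False using p(3)[OF Q] by (simp add: d_def)
  qed
  have dcol: "d \<in> colK u"
  proof -
    have "emb d * u = emb p * (u * b')" using pb' by (simp add: ac_simps)
    also have "\<dots> = emb (p * a)" using a by (simp add: emb_mult)
    finally show ?thesis unfolding colK_def by auto
  qed
  have uB: "u \<in> B" using u(1) by (simp add: unit_of_def)
  have "u \<in> range emb"
  proof (rule ccontr)
    assume nu: "u \<notin> range emb"
    have "colK u \<inter> {1} = {}" using nu by (auto simp: colK_def emb_1)
    then obtain Q where Q: "is_prime_ideal Q" "colK u \<subseteq> Q"
      using exists_prime_avoiding[OF colK_ideal, of "{1}" u] by auto
    obtain P'' where P'': "minimal_prime_over P'' (colK u)" using exists_minimal_prime[OF Q] by blast
    have "P'' \<in> Fset B" using min_colK_Fset[OF H fl ov uB P''] .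
    moreover have "d \<in> P''" using dcol P'' by (auto simp: minimal_prime_over_def)
    ultimately show False using dP dG by (cases "P'' = P") (auto simp: G_def)
  qed
  then obtain v where v: "u = emb v" by blast
  have "emb (v * d) = emb (p * a)"
  proof -
    have "emb (v * d) = emb p * (u * b')" using pb' v by (simp add: emb_mult ac_simps)
    then show ?thesis using a by (simp add: emb_mult)
  qed
  then have "v * d = p * a" by (simp add: emb_inj)
  then have "v * d \<in> P" using p(1) prime_ideal[OF P] by (simp add: ideal_mult2)
  then have "v \<in> P" using dP P unfolding is_prime_ideal_def by blast
  moreover have "emb v \<in> B" "\<exists>w\<in>B. emb v * w = 1" using u(1) v by (auto simp: unit_of_def)
  ultimately show ?thesis by blast
qed


definition Sunits :: "'a::idom fract set \<Rightarrow> 'a set" where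
  "Sunits B = {s. emb s \<in> B \<and> (\<exists>w\<in>B. emb s * w = 1)}"

lemma Sunits_1: "overring B \<Longrightarrow> 1 \<in> Sunits B"
  unfolding Sunits_def by (auto simp: emb_1 overring_def subring_def)

lemma Sunits_mult: "overring B \<Longrightarrow> x \<in> Sunits B \<Longrightarrow> y \<in> Sunits B \<Longrightarrow> x * y \<in> Sunits B"
proof -
  assume ov: "overring B" and x: "x \<in> Sunits B" and y: "y \<in> Sunits B"
  obtain w1 w2 where w: "w1 \<in> B" "emb x * w1 = 1" "w2 \<in> B" "emb y * w2 = 1" "emb x \<in> B" "emb y \<in> B"
    using x y unfolding Sunits_def by blast
  have "emb (x * y) * (w1 * w2) = (emb x * w1) * (emb y * w2)" by (simp add: emb_mult ac_simps)
  then have "emb (x * y) * (w1 * w2) = 1" using w by simp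
  moreover have "w1 * w2 \<in> B" "emb (x * y) \<in> B" using w ov overring_subring[OF ov]
    by (simp_all add: subring_simps emb_mult)
  ultimately show ?thesis unfolding Sunits_def by blast
qed

lemma Sunits_prod: "overring B \<Longrightarrow> (\<And>x. x \<in> A \<Longrightarrow> f x \<in> Sunits B) \<Longrightarrow> prod f A \<in> Sunits B"
  by (induct A rule: infinite_finite_induct) (auto simp: Sunits_1 Sunits_mult)

lemma Sunits_power: "overring B \<Longrightarrow> x \<in> Sunits B \<Longrightarrow> x ^ n \<in> Sunits B"
  by (induct n) (auto simp: Sunits_1 Sunits_mult)

lemma Sunits_0: "0 \<notin> Sunits B"
  unfolding Sunits_def by (auto simp: emb_0)

theorem main:
  fixes B :: "'a::idom fract set"
  assumes H: "\<forall>x::'a. x \<noteq> 0 \<longrightarrow>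
             finite {P. associated_prime (principal_ideal x) P} \<and>
             (\<forall>P. associated_prime (principal_ideal x) P \<longrightarrow> height_one P)"
    and ov: "overring B"
    and fg: "finitely_generated_algebra B"
    and fl: "flat_over B"
    and wc: "well_centered B"
  shows "is_localization B"
proof -
  have fin: "finite (Fset B)" using Fset_finite[OF H fg] .
  have sB: "subring B" using ov by (rule overring_subring)
  have ex: "\<exists>v. v \<in> Sunits B \<and> v \<in> P" if PF: "P \<in> Fset B" for P
  proof -
    obtain v where v: "emb v \<in> B" "\<exists>w\<in>B. emb v * w = 1" "v \<in> P"
      using unit_in_P[OF H fl ov wc fin PF] by blast
    have "v \<in> Sunits B" using v(1,2) unfolding Sunits_def by simp
    then show ?thesis using v(3) by blast
  qed
  define uP where "uP = (\<lambda>P. SOME v. v \<in> Sunits B \<and> v \<in> P)"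
  have uP: "uP P \<in> Sunits B \<and> uP P \<in> P" if PF: "P \<in> Fset B" for P
    unfolding uP_def by (rule someI_ex[OF ex[OF PF]])
  define s0 where "s0 = prod uP (Fset B)"
  have s0S: "s0 \<in> Sunits B" unfolding s0_def
  proof (rule Sunits_prod[OF ov])
    fix P assume "P \<in> Fset B" then show "uP P \<in> Sunits B" using uP by blast
  qed
  have s0P: "s0 \<in> P" if PF: "P \<in> Fset B" for P
  proof -
    have "height_one P" using PF by (simp add: Fset_def)
    then have Pp: "is_prime_ideal P" by (rule ho_prime)
    have "uP P \<in> P" using uP[OF PF] by blast
    then show ?thesis unfolding s0_def using ideal_prod_in[OF prime_ideal[OF Pp] fin PF, of uP] by blast
  qed
  have key: "\<exists>N. s0 ^ N \<in> colK b" if bB: "b \<in> B" for b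
  proof (rule ccontr)
    assume neg: "\<not> ?thesis"
    define M where "M = {s0 ^ k | k. True}"
    have "1 = s0 ^ 0" by simp
    then have M1: "1 \<in> M" unfolding M_def by blast
    have Mm: "x * y \<in> M" if xy: "x \<in> M" "y \<in> M" for x y
    proof -
      obtain k l where "x = s0 ^ k" "y = s0 ^ l" using xy unfolding M_def by blast
      then have "x * y = s0 ^ (k + l)" by (simp add: power_add)
      then show ?thesis unfolding M_def by blast
    qed
    have disj: "colK b \<inter> M = {}" using neg unfolding M_def by blast
    obtain Q where Q: "is_prime_ideal Q" "colK b \<subseteq> Q" "Q \<inter> M = {}"
      using exists_prime_avoiding[OF colK_ideal M1 Mm disj] by blast
    obtain P where P: "minimal_prime_over P (colK b)" "P \<subseteq> Q" using exists_minimal_prime[OF Q(1,2)] by blast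
    have "P \<in> Fset B" using min_colK_Fset[OF H fl ov bB P(1)] .
    then have "s0 \<in> Q" using s0P P(2) by blast
    moreover have "s0 = s0 ^ 1" by simp
    then have "s0 \<in> M" unfolding M_def by blast
    ultimately show False using Q(3) by blast
  qed
  have "B = {Fract a s | a s. s \<in> Sunits B}"
  proof (intro set_eqI iffI)
    fix b assume bB: "b \<in> B"
    obtain N where N: "s0 ^ N \<in> colK b" using key[OF bB] by blast
    define s where "s = s0 ^ N"
    have sS: "s \<in> Sunits B" unfolding s_def using Sunits_power[OF ov s0S] .
    then have "s \<noteq> 0" using Sunits_0[of B] by metis
    then have s0: "emb s \<noteq> 0" by (simp add: emb_eq_0)
    obtain a where a: "emb s * b = emb a" using N unfolding s_def colK_def by auto
    have "Fract a s = emb a * inverse (emb s)" by (rule Fract_emb2)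
    also have "\<dots> = (emb s * inverse (emb s)) * b" using a by (simp add: ac_simps)
    also have "\<dots> = b" using s0 by simp
    finally show "b \<in> {Fract a s | a s. s \<in> Sunits B}" using sS by blast
  next
    fix b assume "b \<in> {Fract a s | a s. s \<in> Sunits B}"
    then obtain a s where b: "b = Fract a s" "s \<in> Sunits B" by blast
    then obtain w where w: "w \<in> B" "emb s * w = 1" unfolding Sunits_def by blast
    then have "w = inverse (emb s)" using inverse_unique[OF w(2)] by simp
    then have "b = emb a * w" using b by (simp add: Fract_emb2)
    then show "b \<in> B" using w ov sB by (simp add: subring_simps overring_emb)
  qed
  moreover have "\<forall>x\<in>Sunits B. \<forall>y\<in>Sunits B. x * y \<in> Sunits B" using Sunits_mult[OF ov] by blast
  moreover note Sunits_1[OF ov] Sunits_0[of B]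
  ultimately show ?thesis unfolding is_localization_def by blast
qed


theorem theorem4p19:
  fixes B :: "'a::idom fract set"
  assumes "\<forall>x::'a. x \<noteq> 0 \<longrightarrow>
             finite {P. associated_prime (principal_ideal x) P} \<and>
             (\<forall>P. associated_prime (principal_ideal x) P \<longrightarrow> height_one P)"
    and "overring B"
    and "finitely_generated_algebra B"
    and "flat_over B"
    and "well_centered B"
  shows "is_localization B"
  by (rule main[OF assms])

end
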